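(* Let $G$ be a finite simple undirected graph, $T$ a spanning forest of $G$, and let $G'=G+e$ be obtained by inserting a new edge $e$ between two distinct non-adjacent vertices; let $T'=T$ if the endpoints of $e$ lie in the same tree of $T$, and $T'=T+e$ otherwise (so $T'$ is a spanning forest of $G'$). Let $(u,v)$ be an edge of $T$, and let $\mathrm{rep}(u,v)$ and $\mathrm{rep}'(u,v)$ denote the number of replacement edges of $(u,v)$ with respect to $(G,T)$ and $(G',T')$, respectively. Then $u$ and $v$ lie in different 2-edge-connected components of $G$ but in the same 2-edge-connected component of $G'$ if and only if $\mathrm{rep}(u,v)=0$ and $\mathrm{rep}'(u,v)=1$.
   Context: A spanning forest of a graph $H$ is an acyclic subgraph on all vertices of $H$ whose components have the same vertex sets as the components of $H$. Given $H$ and a spanning forest $F$, a replacement edge for an edge $f$ of $F$ is an edge $(x,y)\in E(H)\setminus E(F)$ with $x,y$ in the same tree of $F$ such that the unique path in $F$ between $x$ and $y$ contains $f$. Two vertices are 2-edge connected if there exist at least two edge-disjoint paths between them; the 2-edge-connected components are the equivalence classes of this relation. *)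

theory Defs
  imports Main
begin

definition simple_graph :: "'a set \<Rightarrow> 'a set set \<Rightarrow> bool" where
  "simple_graph V E \<longleftrightarrow> finite V \<and>
     (\<forall>e\<in>E. \<exists>x y. x \<noteq> y \<and> x \<in> V \<and> y \<in> V \<and> e = {x, y})"

definition is_path :: "'a set set \<Rightarrow> 'a \<Rightarrow> 'a \<Rightarrow> 'a list \<Rightarrow> bool" where
  "is_path F x y p \<longleftrightarrow> p \<noteq> [] \<and> hd p = x \<and> last p = y \<and> distinct p \<and>
     (\<forall>i. Suc i < length p \<longrightarrow> {p ! i, p ! Suc i} \<in> F)"

definition path_edges :: "'a list \<Rightarrow> 'a set set" where
  "path_edges p = {{p ! i, p ! Suc i} | i. Suc i < length p}"

definition connected_in :: "'a set set \<Rightarrow> 'a \<Rightarrow> 'a \<Rightarrow> bool" where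
  "connected_in F x y \<longleftrightarrow> (\<exists>p. is_path F x y p)"

definition is_cycle :: "'a set set \<Rightarrow> 'a list \<Rightarrow> bool" where
  "is_cycle F c \<longleftrightarrow> length c \<ge> 3 \<and> distinct c \<and>
     (\<forall>i. Suc i < length c \<longrightarrow> {c ! i, c ! Suc i} \<in> F) \<and> {last c, hd c} \<in> F"

definition acyclic_edges :: "'a set set \<Rightarrow> bool" where
  "acyclic_edges F \<longleftrightarrow> (\<nexists>c. is_cycle F c)"

definition spanning_forest :: "'a set \<Rightarrow> 'a set set \<Rightarrow> 'a set set \<Rightarrow> bool" where
  "spanning_forest V E F \<longleftrightarrow> F \<subseteq> E \<and> acyclic_edges F \<and>
     (\<forall>x\<in>V. \<forall>y\<in>V. connected_in F x y \<longleftrightarrow> connected_in E x y)"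

definition replacement_edge :: "'a set set \<Rightarrow> 'a set set \<Rightarrow> 'a set \<Rightarrow> 'a set \<Rightarrow> bool" where
  "replacement_edge E F f e \<longleftrightarrow> e \<in> E - F \<and>
     (\<exists>x y. e = {x, y} \<and> connected_in F x y \<and>
        (\<exists>p. is_path F x y p \<and> f \<in> path_edges p))"

definition rep :: "'a set set \<Rightarrow> 'a set set \<Rightarrow> 'a set \<Rightarrow> nat" where
  "rep E F f = card {e. replacement_edge E F f e}"

definition two_edge_connected :: "'a set set \<Rightarrow> 'a \<Rightarrow> 'a \<Rightarrow> bool" where
  "two_edge_connected E x y \<longleftrightarrow>
     (\<exists>p q. is_path E x y p \<and> is_path E x y q \<and> path_edges p \<inter> path_edges q = {})"

end

theory Submission
  imports Defs
begin

definition adjr :: "'a set set \<Rightarrow> 'a \<Rightarrow> 'a \<Rightarrow> bool" where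
  "adjr F a b \<longleftrightarrow> {a, b} \<in> F"

lemma adjr_sym: "adjr F a b = adjr F b a"
  by (simp add: adjr_def insert_commute)

lemma rt_sym: "(adjr F)\<^sup>*\<^sup>* x y \<Longrightarrow> (adjr F)\<^sup>*\<^sup>* y x"
proof (induction rule: rtranclp_induct)
  case (step y z)
  then have "adjr F z y" by (simp add: adjr_sym)
  then show ?case using step(3) by (rule converse_rtranclp_into_rtranclp)
qed simp

lemma rt_pair:
  assumes "(adjr F)\<^sup>*\<^sup>* s t" "{s, t} = {c, d}"
  shows "(adjr F)\<^sup>*\<^sup>* c d"
proof -
  have "(s = c \<and> t = d) \<or> (s = d \<and> t = c)" using assms(2) by (auto simp: doubleton_eq_iff)
  then show ?thesis
  proof
    assume "s = c \<and> t = d" then show ?thesis using assms(1) by simp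
  next
    assume "s = d \<and> t = c" then show ?thesis using rt_sym[OF assms(1)] by simp
  qed
qed

lemma rt_mono: assumes "F \<subseteq> G" shows "(adjr F)\<^sup>*\<^sup>* x y \<Longrightarrow> (adjr G)\<^sup>*\<^sup>* x y"
proof (induction rule: rtranclp_induct)
  case (step y z)
  then have "adjr G y z" using assms by (auto simp: adjr_def)
  then show ?case using step(3) by (rule rtranclp.rtrancl_into_rtrancl[rotated])
qed simp

lemma rt_lift:
  assumes "\<And>p q. {p, q} \<in> F \<Longrightarrow> (adjr G)\<^sup>*\<^sup>* p q"
  shows "(adjr F)\<^sup>*\<^sup>* x y \<Longrightarrow> (adjr G)\<^sup>*\<^sup>* x y"
proof (induction rule: rtranclp_induct)
  case (step y z)
  then have "(adjr G)\<^sup>*\<^sup>* y z" using assms by (auto simp: adjr_def)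
  then show ?case using step(3) by (rule rtranclp_trans[rotated])
qed simp

lemma IR:
  assumes "is_path F x y p" "k < length p" "i \<le> k"
    "\<forall>j. i \<le> j \<and> j < k \<longrightarrow> {p ! j, p ! Suc j} \<notin> X"
  shows "(adjr (F - X))\<^sup>*\<^sup>* (p ! i) (p ! k)"
  using assms(2-4)
proof (induction k)
  case 0
  then show ?case by simp
next
  case (Suc k)
  show ?case
  proof (cases "i = Suc k")
    case True
    then show ?thesis by simp
  next
    case False
    then have "i \<le> k" using Suc by simp
    then have 1: "(adjr (F - X))\<^sup>*\<^sup>* (p ! i) (p ! k)" using Suc by auto
    have "{p ! k, p ! Suc k} \<in> F" using assms(1) Suc(2) by (auto simp: is_path_def)
    moreover have "{p ! k, p ! Suc k} \<notin> X" using Suc(4) \<open>i \<le> k\<close> by auto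
    ultimately have "adjr (F - X) (p ! k) (p ! Suc k)" by (simp add: adjr_def)
    with 1 show ?thesis by (rule rtranclp.rtrancl_into_rtrancl)
  qed
qed

lemma path_rt: "is_path F x y p \<Longrightarrow> (adjr F)\<^sup>*\<^sup>* x y"
proof -
  assume a: "is_path F x y p"
  then have "(adjr (F - {}))\<^sup>*\<^sup>* (p ! 0) (p ! (length p - 1))"
    by (intro IR) (auto simp: is_path_def)
  moreover have "p ! 0 = x" "p ! (length p - 1) = y" using a
    by (auto simp: is_path_def hd_conv_nth last_conv_nth)
  ultimately show ?thesis by simp
qed

lemma rt_path: "(adjr F)\<^sup>*\<^sup>* x y \<Longrightarrow> \<exists>p. is_path F x y p"
proof (induction rule: rtranclp_induct)
  case base
  then show ?case by (rule exI[of _ "[x]"]) (simp add: is_path_def)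
next
  case (step y z)
  then obtain p where p: "is_path F x y p" by blast
  show ?case
  proof (cases "z \<in> set p")
    case True
    then obtain k where k: "k < length p" "p ! k = z" by (auto simp: in_set_conv_nth)
    have kk: "length p \<le> Suc k \<Longrightarrow> length p - Suc 0 = k" using k by linarith
    have "is_path F x z (take (Suc k) p)"
      using p k kk by (auto simp: is_path_def hd_conv_nth last_conv_nth min_def)
    then show ?thesis by blast
  next
    case False
    have "is_path F x z (p @ [z])"
      unfolding is_path_def
    proof (intro conjI allI impI)
      show "hd (p @ [z]) = x" using p by (auto simp: is_path_def)
      show "distinct (p @ [z])" using p False by (auto simp: is_path_def)
      fix i assume i: "Suc i < length (p @ [z])"
      show "{(p @ [z]) ! i, (p @ [z]) ! Suc i} \<in> F"
      proof (cases "Suc i < length p")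
        case True
        then show ?thesis using p by (auto simp: is_path_def nth_append)
      next
        case False
        then have "i = length p - 1" "p \<noteq> []" using i p by (auto simp: is_path_def)
        then have "(p @ [z]) ! i = y" "(p @ [z]) ! Suc i = z"
          using p by (auto simp: is_path_def nth_append last_conv_nth)
        then show ?thesis using step(2) by (simp add: adjr_def)
      qed
    qed auto
    then show ?thesis by blast
  qed
qed

lemma conn_iff: "connected_in F x y \<longleftrightarrow> (adjr F)\<^sup>*\<^sup>* x y"
  unfolding connected_in_def using path_rt rt_path by metis

lemma path_edges_sub: "is_path F x y p \<Longrightarrow> path_edges p \<subseteq> F"
  by (auto simp: is_path_def path_edges_def)

lemma path_mono: "is_path F x y p \<Longrightarrow> F \<subseteq> G \<Longrightarrow> is_path G x y p"
  by (auto simp: is_path_def)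

lemma path_avoid: "is_path F x y p \<Longrightarrow> f \<notin> path_edges p \<Longrightarrow> is_path (F - {f}) x y p"
  by (auto simp: is_path_def path_edges_def)

lemma edge_idx_unique:
  assumes "distinct p" "Suc i < length p" "Suc j < length p"
    "{p ! j, p ! Suc j} = {p ! i, p ! Suc i}"
  shows "j = i"
proof -
  have "(p ! j = p ! i \<and> p ! Suc j = p ! Suc i) \<or> (p ! j = p ! Suc i \<and> p ! Suc j = p ! i)"
    using assms(4) by (auto simp: doubleton_eq_iff)
  then show ?thesis
    using assms(1-3) by (auto simp: nth_eq_iff_index_eq)
qed

lemma split_path:
  assumes "is_path F x y p" "Suc j < length p" "g = {p ! j, p ! Suc j}"
  shows "(adjr (F - {g}))\<^sup>*\<^sup>* x (p ! j) \<and> (adjr (F - {g}))\<^sup>*\<^sup>* (p ! Suc j) y"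
proof -
  have d: "distinct p" using assms(1) by (simp add: is_path_def)
  have x: "p ! 0 = x" and y: "p ! (length p - 1) = y" using assms(1)
    by (auto simp: is_path_def hd_conv_nth last_conv_nth)
  have ne: "{p ! j', p ! Suc j'} \<notin> {g}" if "Suc j' < length p" "j' \<noteq> j" for j'
    using edge_idx_unique[OF d assms(2) that(1)] that assms(3) by auto
  have c1: "\<forall>j'. 0 \<le> j' \<and> j' < j \<longrightarrow> {p ! j', p ! Suc j'} \<notin> {g}"
  proof (intro allI impI)
    fix j' assume "0 \<le> j' \<and> j' < j"
    then show "{p ! j', p ! Suc j'} \<notin> {g}" using ne[of j'] assms(2) by simp
  qed
  have c2: "\<forall>j'. Suc j \<le> j' \<and> j' < length p - 1 \<longrightarrow> {p ! j', p ! Suc j'} \<notin> {g}"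
  proof (intro allI impI)
    fix j' assume "Suc j \<le> j' \<and> j' < length p - 1"
    then have "Suc j' < length p" "j' \<noteq> j" by linarith+
    then show "{p ! j', p ! Suc j'} \<notin> {g}" using ne[of j'] by simp
  qed
  have "(adjr (F - {g}))\<^sup>*\<^sup>* (p ! 0) (p ! j)"
    using assms(2) c1 by (intro IR[OF assms(1)]) auto
  moreover have "(adjr (F - {g}))\<^sup>*\<^sup>* (p ! Suc j) (p ! (length p - 1))"
    using assms(2) c2 by (intro IR[OF assms(1)]) auto
  ultimately show ?thesis using x y by simp
qed

lemma acyc_bridge:
  assumes "acyclic_edges F" "{u, v} \<in> F" "u \<noteq> v"
  shows "\<not> (adjr (F - {{u, v}}))\<^sup>*\<^sup>* u v"
proof
  assume "(adjr (F - {{u, v}}))\<^sup>*\<^sup>* u v"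
  from rt_path[OF this] obtain p where p: "is_path (F - {{u, v}}) u v p" by blast
  have ne: "p \<noteq> []" and hd: "hd p = u" and lst: "last p = v" using p by (auto simp: is_path_def)
  have "length p \<noteq> 1"
  proof
    assume "length p = 1"
    then have "hd p = last p" using ne by (simp add: hd_conv_nth last_conv_nth)
    then show False using hd lst assms(3) by simp
  qed
  moreover have "length p \<noteq> 2"
  proof
    assume "length p = 2"
    then have "{p ! 0, p ! Suc 0} \<in> F - {{u, v}}" using p unfolding is_path_def by simp
    moreover have "p ! 0 = u" using hd ne by (simp add: hd_conv_nth)
    moreover have "p ! Suc 0 = v" using lst ne \<open>length p = 2\<close> by (simp add: last_conv_nth)
    ultimately show False by simp
  qed
  moreover have "length p \<noteq> 0" using ne by simp
  ultimately have l3: "length p \<ge> 3" by linarith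
  have "{last p, hd p} \<in> F" using assms(2) hd lst by (simp add: insert_commute)
  moreover have "\<forall>i. Suc i < length p \<longrightarrow> {p ! i, p ! Suc i} \<in> F"
    using p by (auto simp: is_path_def)
  moreover have "distinct p" using p by (simp add: is_path_def)
  ultimately have "is_cycle F p" using l3 by (simp add: is_cycle_def)
  then show False using assms(1) by (auto simp: acyclic_edges_def)
qed

lemma first_cross:
  assumes "P (p ! 0)" "\<not> P (p ! n)"
  shows "\<exists>j. Suc j \<le> n \<and> P (p ! j) \<and> \<not> P (p ! Suc j)"
  using assms(2)
proof (induction n)
  case 0
  then show ?case using assms(1) by simp
next
  case (Suc n)
  show ?case
  proof (cases "P (p ! n)")
    case True
    then show ?thesis using Suc.prems by auto
  next
    case False
    then obtain j where "Suc j \<le> n \<and> P (p ! j) \<and> \<not> P (p ! Suc j)" using Suc.IH by blast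
    then show ?thesis by (intro exI[of _ j]) auto
  qed
qed

lemma pe2: "path_edges [u, v] = {{u, v}}"
proof -
  have "{{[u, v] ! i, [u, v] ! Suc i} | i. Suc i < length [u, v]} = {{[u, v] ! i, [u, v] ! Suc i} | i. i = 0}"
    by (intro arg_cong[where f=Collect] ext) auto
  then show ?thesis unfolding path_edges_def by simp
qed

lemma twoec_iff:
  assumes H1: "\<forall>e\<in>E. \<exists>x y. x \<noteq> y \<and> x \<in> V \<and> y \<in> V \<and> e = {x, y}"
    and H2: "T \<subseteq> E"
    and H3: "\<forall>x\<in>V. \<forall>y\<in>V. (adjr E)\<^sup>*\<^sup>* x y \<longrightarrow> (adjr T)\<^sup>*\<^sup>* x y"
    and H4: "{u, v} \<in> T" "u \<noteq> v"
    and H5: "\<not> (adjr (T - {{u, v}}))\<^sup>*\<^sup>* u v"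
  shows "two_edge_connected E u v \<longleftrightarrow> (\<exists>e. replacement_edge E T {u, v} e)"
proof
  assume "two_edge_connected E u v"
  then obtain p q where pq: "is_path E u v p" "is_path E u v q" "path_edges p \<inter> path_edges q = {}"
    unfolding two_edge_connected_def by blast
  obtain q where q: "is_path E u v q" "{u, v} \<notin> path_edges q"
    using pq by blast
  then have q': "is_path (E - {{u, v}}) u v q" by (rule path_avoid)
  define S where "S z \<longleftrightarrow> (adjr (T - {{u, v}}))\<^sup>*\<^sup>* u z" for z
  have q0: "q ! 0 = u" and ql: "q ! (length q - 1) = v" and qn: "q \<noteq> []" using q
    by (auto simp: is_path_def hd_conv_nth last_conv_nth)
  have "S (q ! 0)" using q0 by (simp add: S_def)
  moreover have "\<not> S (q ! (length q - 1))" using ql H5 by (simp add: S_def)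
  ultimately obtain j where j: "Suc j \<le> length q - 1" "S (q ! j)" "\<not> S (q ! Suc j)"
    using first_cross[of S q "length q - 1"] by blast
  define x where "x = q ! j"
  define y where "y = q ! Suc j"
  have jl: "Suc j < length q" using j qn by (cases q) auto
  have eE: "{x, y} \<in> E - {{u, v}}" using q' jl by (auto simp: is_path_def x_def y_def)
  have eT: "{x, y} \<notin> T"
  proof
    assume "{x, y} \<in> T"
    then have "adjr (T - {{u, v}}) x y" using eE by (simp add: adjr_def)
    then have "S y" using j(2) unfolding S_def x_def y_def
      by (metis rtranclp.rtrancl_into_rtrancl x_def y_def)
    then show False using j(3) y_def by simp
  qed
  obtain x' y' where xy': "x' \<in> V" "y' \<in> V" "{x, y} = {x', y'}" using H1 eE by blast
  have xV: "x \<in> V" "y \<in> V" using xy' by (auto simp: doubleton_eq_iff)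
  have "adjr E x y" using eE by (simp add: adjr_def)
  then have "(adjr T)\<^sup>*\<^sup>* x y" using H3 xV by blast
  from rt_path[OF this] obtain p where p: "is_path T x y p" by blast
  have uvp: "{u, v} \<in> path_edges p"
  proof (rule ccontr)
    assume "{u, v} \<notin> path_edges p"
    then have "is_path (T - {{u, v}}) x y p" by (rule path_avoid[OF p])
    then have "(adjr (T - {{u, v}}))\<^sup>*\<^sup>* x y" by (rule path_rt)
    then have "S y" using j(2) unfolding S_def x_def by (metis rtranclp_trans x_def)
    then show False using j(3) y_def by simp
  qed
  have "replacement_edge E T {u, v} {x, y}"
    unfolding replacement_edge_def connected_in_def using eE eT p uvp by blast
  then show "\<exists>e. replacement_edge E T {u, v} e" by blast
next
  assume "\<exists>e. replacement_edge E T {u, v} e"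
  then obtain x y p where e: "{x, y} \<in> E - T" "is_path T x y p" "{u, v} \<in> path_edges p"
    unfolding replacement_edge_def by blast
  then obtain i where i: "Suc i < length p" "{u, v} = {p ! i, p ! Suc i}"
    by (auto simp: path_edges_def)
  have sp: "(adjr (T - {{u, v}}))\<^sup>*\<^sup>* x (p ! i) \<and> (adjr (T - {{u, v}}))\<^sup>*\<^sup>* (p ! Suc i) y"
    using split_path[OF e(2) i] .
  have sub: "T - {{u, v}} \<subseteq> E - {{u, v}}" using H2 by blast
  have r1: "(adjr (E - {{u, v}}))\<^sup>*\<^sup>* (p ! i) x"
    using rt_sym[OF rt_mono[OF sub conjunct1[OF sp]]] .
  have r3: "(adjr (E - {{u, v}}))\<^sup>*\<^sup>* y (p ! Suc i)"
    using rt_sym[OF rt_mono[OF sub conjunct2[OF sp]]] .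
  have "{x, y} \<noteq> {u, v}" using e(1) H4 by auto
  then have "adjr (E - {{u, v}}) x y" using e(1) by (simp add: adjr_def)
  then have "(adjr (E - {{u, v}}))\<^sup>*\<^sup>* (p ! i) (p ! Suc i)"
    using r1 r3 by (meson rtranclp.rtrancl_into_rtrancl rtranclp_trans)
  note rr = this
  have "(p ! i = u \<and> p ! Suc i = v) \<or> (p ! i = v \<and> p ! Suc i = u)"
    using i(2) by (auto simp: doubleton_eq_iff)
  then have "(adjr (E - {{u, v}}))\<^sup>*\<^sup>* u v"
    using rr rt_sym[OF rr] by auto
  from rt_path[OF this] obtain q where q: "is_path (E - {{u, v}}) u v q" by blast
  have "is_path E u v [u, v]" using H4 H2 by (auto simp: is_path_def)
  moreover have "is_path E u v q" using q by (rule path_mono) blast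
  moreover have "path_edges q \<subseteq> E - {{u, v}}" using q by (rule path_edges_sub)
  then have "path_edges [u, v] \<inter> path_edges q = {}" unfolding pe2 by blast
  ultimately show "two_edge_connected E u v" unfolding two_edge_connected_def by blast
qed

theorem lemma15:
  fixes V :: "'a set" and E T :: "'a set set" and a b u v :: 'a
  assumes "simple_graph V E"
    and "spanning_forest V E T"
    and "a \<in> V" "b \<in> V" "a \<noteq> b" "{a, b} \<notin> E"
    and "{u, v} \<in> T"
  shows "(\<not> two_edge_connected E u v \<and> two_edge_connected (insert {a, b} E) u v)
     \<longleftrightarrow> (rep E T {u, v} = 0 \<and>
          rep (insert {a, b} E) (if connected_in T a b then T else insert {a, b} T) {u, v} = 1)"
proof -
  define E' where "E' = insert {a, b} E"
  define T' where "T' = (if connected_in T a b then T else insert {a, b} T)"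
  have H1: "\<forall>e\<in>E. \<exists>x y. x \<noteq> y \<and> x \<in> V \<and> y \<in> V \<and> e = {x, y}"
    and fV: "finite V" using assms(1) by (auto simp: simple_graph_def)
  have H2: "T \<subseteq> E" and acyc: "acyclic_edges T"
    and H3c: "\<forall>x\<in>V. \<forall>y\<in>V. connected_in T x y \<longleftrightarrow> connected_in E x y"
    using assms(2) by (auto simp: spanning_forest_def)
  have H3: "\<forall>x\<in>V. \<forall>y\<in>V. (adjr E)\<^sup>*\<^sup>* x y \<longrightarrow> (adjr T)\<^sup>*\<^sup>* x y"
    using H3c by (simp add: conn_iff)
  have uv: "u \<noteq> v" using H1 H2 assms(7) by (force simp: doubleton_eq_iff)
  have H5: "\<not> (adjr (T - {{u, v}}))\<^sup>*\<^sup>* u v"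
    using acyc_bridge[OF acyc assms(7) uv] .
  have EV: "E \<subseteq> Pow V"
  proof
    fix e assume "e \<in> E"
    then obtain x y where "x \<in> V" "y \<in> V" "e = {x, y}" using H1 by blast
    then show "e \<in> Pow V" by simp
  qed
  have fE: "finite E" using finite_subset[OF EV] fV by simp
  then have fE': "finite E'" by (simp add: E'_def)
  have abT: "{a, b} \<notin> T" using H2 assms(6) by blast
  have H1': "\<forall>e\<in>E'. \<exists>x y. x \<noteq> y \<and> x \<in> V \<and> y \<in> V \<and> e = {x, y}"
    unfolding E'_def using H1 assms(3-5) by blast
  have H2': "T' \<subseteq> E'" using H2 by (auto simp: E'_def T'_def)
  have TT': "T \<subseteq> T'" by (auto simp: T'_def)
  have H3': "\<forall>x\<in>V. \<forall>y\<in>V. (adjr E')\<^sup>*\<^sup>* x y \<longrightarrow> (adjr T')\<^sup>*\<^sup>* x y"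
  proof (intro ballI impI)
    fix x y assume xy: "x \<in> V" "y \<in> V" "(adjr E')\<^sup>*\<^sup>* x y"
    have ed: "(adjr T')\<^sup>*\<^sup>* p q" if pq: "{p, q} \<in> E'" for p q
    proof (cases "{p, q} = {a, b}")
      case True
      have "(adjr T')\<^sup>*\<^sup>* a b"
      proof (cases "connected_in T a b")
        case True
        then show ?thesis using rt_mono[OF TT'] conn_iff by metis
      next
        case False
        then have "adjr T' a b" by (simp add: T'_def adjr_def)
        then show ?thesis by blast
      qed
      then show ?thesis using True[symmetric] by (rule rt_pair)
    next
      case False
      then have "{p, q} \<in> E" using pq by (simp add: E'_def)
      then have "p \<in> V" "q \<in> V" using H1 by (auto simp: doubleton_eq_iff)
      moreover have "adjr E p q" using \<open>{p, q} \<in> E\<close> by (simp add: adjr_def)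
      ultimately have "(adjr T)\<^sup>*\<^sup>* p q" using H3 by blast
      then show ?thesis by (rule rt_mono[OF TT'])
    qed
    show "(adjr T')\<^sup>*\<^sup>* x y" using rt_lift[OF ed xy(3)] .
  qed
  have H4': "{u, v} \<in> T'" using TT' assms(7) by blast
  have H5': "\<not> (adjr (T' - {{u, v}}))\<^sup>*\<^sup>* u v"
  proof (cases "connected_in T a b")
    case True
    then show ?thesis using H5 by (simp add: T'_def)
  next
    case nc: False
    then have T'd: "T' = insert {a, b} T" by (simp add: T'_def)
    show ?thesis
    proof
      assume "(adjr (T' - {{u, v}}))\<^sup>*\<^sup>* u v"
      from rt_path[OF this] obtain p where p: "is_path (T' - {{u, v}}) u v p" by blast
      show False
      proof (cases "{a, b} \<in> path_edges p")
        case False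
        then have "is_path (T' - {{u, v}} - {{a, b}}) u v p" by (rule path_avoid[OF p])
        then have "is_path (T - {{u, v}}) u v p" by (rule path_mono) (auto simp: T'd)
        then have "(adjr (T - {{u, v}}))\<^sup>*\<^sup>* u v" by (rule path_rt)
        then show False using H5 by blast
      next
        case True
        then obtain j where j: "Suc j < length p" "{a, b} = {p ! j, p ! Suc j}"
          by (auto simp: path_edges_def)
        have sp: "(adjr (T' - {{u, v}} - {{a, b}}))\<^sup>*\<^sup>* u (p ! j) \<and>
            (adjr (T' - {{u, v}} - {{a, b}}))\<^sup>*\<^sup>* (p ! Suc j) v"
          using split_path[OF p j] .
        have sub: "T' - {{u, v}} - {{a, b}} \<subseteq> T" by (auto simp: T'd)
        have r1: "(adjr T)\<^sup>*\<^sup>* (p ! j) u" using rt_sym[OF rt_mono[OF sub conjunct1[OF sp]]] .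
        have r2: "(adjr T)\<^sup>*\<^sup>* v (p ! Suc j)" using rt_sym[OF rt_mono[OF sub conjunct2[OF sp]]] .
        have "adjr T u v" using assms(7) by (simp add: adjr_def)
        then have "(adjr T)\<^sup>*\<^sup>* (p ! j) (p ! Suc j)"
          using r1 r2 by (meson rtranclp.rtrancl_into_rtrancl rtranclp_trans)
        then have "(adjr T)\<^sup>*\<^sup>* a b" using j(2)[symmetric] by (rule rt_pair)
        then show False using nc conn_iff by metis
      qed
    qed
  qed
  have A: "two_edge_connected E u v \<longleftrightarrow> (\<exists>e. replacement_edge E T {u, v} e)"
    by (rule twoec_iff[OF H1 H2 H3 assms(7) uv H5])
  have A': "two_edge_connected E' u v \<longleftrightarrow> (\<exists>e. replacement_edge E' T' {u, v} e)"
    by (rule twoec_iff[OF H1' H2' H3' H4' uv H5'])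
  have fin: "finite {e. replacement_edge E T {u, v} e}"
    by (rule finite_subset[OF _ fE]) (auto simp: replacement_edge_def)
  have fin': "finite {e. replacement_edge E' T' {u, v} e}"
    by (rule finite_subset[OF _ fE']) (auto simp: replacement_edge_def)
  have R0: "rep E T {u, v} = 0 \<longleftrightarrow> \<not> (\<exists>e. replacement_edge E T {u, v} e)"
    using fin by (auto simp: rep_def)
  have B: "{e. replacement_edge E' T' {u, v} e} \<subseteq> {{a, b}}"
    if none: "\<not> (\<exists>e. replacement_edge E T {u, v} e)"
  proof
    fix e assume "e \<in> {e. replacement_edge E' T' {u, v} e}"
    then have re: "replacement_edge E' T' {u, v} e" by simp
    show "e \<in> {{a, b}}"
    proof (rule ccontr)
      assume "e \<notin> {{a, b}}"
      then have eE: "e \<in> E - T" using re TT' by (auto simp: replacement_edge_def E'_def)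
      obtain x y p where xy: "e = {x, y}" "is_path T' x y p" "{u, v} \<in> path_edges p"
        using re unfolding replacement_edge_def by blast
      have xV: "x \<in> V" "y \<in> V" using H1 eE xy(1) by (auto simp: doubleton_eq_iff)
      have "adjr E x y" using eE xy(1) by (simp add: adjr_def)
      then have Txy: "(adjr T)\<^sup>*\<^sup>* x y" using H3 xV by blast
      have "is_path T x y p"
      proof (cases "connected_in T a b")
        case True
        then show ?thesis using xy(2) by (simp add: T'_def)
      next
        case nc: False
        then have T'd: "T' = insert {a, b} T" by (simp add: T'_def)
        show ?thesis
        proof (cases "{a, b} \<in> path_edges p")
          case False
          then have "is_path (T' - {{a, b}}) x y p" by (rule path_avoid[OF xy(2)])
          then show ?thesis by (rule path_mono) (auto simp: T'd)
        next
          case True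
          then obtain j where j: "Suc j < length p" "{a, b} = {p ! j, p ! Suc j}"
            by (auto simp: path_edges_def)
          have sp: "(adjr (T' - {{a, b}}))\<^sup>*\<^sup>* x (p ! j) \<and>
              (adjr (T' - {{a, b}}))\<^sup>*\<^sup>* (p ! Suc j) y"
            using split_path[OF xy(2) j] .
          have sub: "T' - {{a, b}} \<subseteq> T" by (auto simp: T'd)
          have r1: "(adjr T)\<^sup>*\<^sup>* (p ! j) x" using rt_sym[OF rt_mono[OF sub conjunct1[OF sp]]] .
          have r2: "(adjr T)\<^sup>*\<^sup>* y (p ! Suc j)" using rt_sym[OF rt_mono[OF sub conjunct2[OF sp]]] .
          have "(adjr T)\<^sup>*\<^sup>* (p ! j) (p ! Suc j)"
            using r1 r2 Txy by (meson rtranclp_trans)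
          then have "(adjr T)\<^sup>*\<^sup>* a b" using j(2)[symmetric] by (rule rt_pair)
          then show ?thesis using nc conn_iff by metis
        qed
      qed
      then have "replacement_edge E T {u, v} e"
        using eE xy unfolding replacement_edge_def connected_in_def by blast
      then show False using none by blast
    qed
  qed
  have R1: "rep E' T' {u, v} = 1 \<longleftrightarrow> (\<exists>e. replacement_edge E' T' {u, v} e)"
    if none: "\<not> (\<exists>e. replacement_edge E T {u, v} e)"
  proof -
    have "{e. replacement_edge E' T' {u, v} e} = {} \<or> {e. replacement_edge E' T' {u, v} e} = {{a, b}}"
      using B[OF none] by blast
    then show ?thesis
    proof
      assume h: "{e. replacement_edge E' T' {u, v} e} = {}"
      have "rep E' T' {u, v} = 0" unfolding rep_def h by simp
      moreover have "\<not> (\<exists>e. replacement_edge E' T' {u, v} e)" using h by blast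
      ultimately show ?thesis by simp
    next
      assume h: "{e. replacement_edge E' T' {u, v} e} = {{a, b}}"
      have "rep E' T' {u, v} = 1" unfolding rep_def h by simp
      moreover have "replacement_edge E' T' {u, v} {a, b}" using h by blast
      ultimately show ?thesis by blast
    qed
  qed
  have main: "(\<not> two_edge_connected E u v \<and> two_edge_connected E' u v)
     \<longleftrightarrow> (rep E T {u, v} = 0 \<and> rep E' T' {u, v} = 1)"
  proof
    assume L: "\<not> two_edge_connected E u v \<and> two_edge_connected E' u v"
    then have n: "\<not> (\<exists>e. replacement_edge E T {u, v} e)" using A by simp
    have y: "\<exists>e. replacement_edge E' T' {u, v} e" using L A' by simp
    show "rep E T {u, v} = 0 \<and> rep E' T' {u, v} = 1"
      using R0 R1[OF n] n y by simp
  next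
    assume L: "rep E T {u, v} = 0 \<and> rep E' T' {u, v} = 1"
    then have n: "\<not> (\<exists>e. replacement_edge E T {u, v} e)" using R0 by simp
    have y: "\<exists>e. replacement_edge E' T' {u, v} e" using L R1[OF n] by simp
    show "\<not> two_edge_connected E u v \<and> two_edge_connected E' u v"
      using A A' n y by simp
  qed
  then show ?thesis unfolding E'_def T'_def .
qed

end
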